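(* Let $A$ be a finite tree rooted at $e$, with all arcs directed from the root towards the leaves, let $R\subseteq V(A)$ be a set of destinations containing all leaves of $A$, and let $D\subseteq V(A)$. Let $u\neq e$ be a vertex of $A$ having $\ell$ children $u_1,\dots,u_\ell$, and for each $i$, $1\le i\le \ell$, let $(b_i,d_i,\mathrm{load}_i)$ be the window of the solution $\mathcal{S}(D)$ on the arc $a^{u_i}$. Then the window of $\mathcal{S}(D)$ on the arc $a^{u}$ is \[ \begin{cases} \left(1,\ 1+\sum_{i=1}^{\ell} d_i,\ \sum_{i=1}^{\ell}\mathrm{load}_i+1\right) & \text{if } u\in D,\\ \left(1+\sum_{i=1}^{\ell} b_i,\ \sum_{i=1}^{\ell} d_i,\ \sum_{i=1}^{\ell}\mathrm{load}_i+\sum_{i=1}^{\ell} b_i+1\right) & \text{if } u\notin D \text{ and } u\in R,\\ \left(\sum_{i=1}^{\ell} b_i,\ \sum_{i=1}^{\ell} d_i,\ \sum_{i=1}^{\ell}\mathrm{load}_i+\sum_{i=1}^{\ell} b_i\right) & \text{if } u\notin D \text{ and } u\notin R. \end{cases} \]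
   Context: Setting (multicast with diffusing nodes): $A$ is a multicast tree for a request $(e,R)$: a tree rooted at the source $e$, arcs directed away from $e$, whose leaves lie in the destination set $R$. A set $D\subseteq V(A)$ is a set of diffusing (branching) nodes. The solution $\mathcal{S}(D)$ is a set of directed paths in $A$ such that: every node of $R$ is the final extremity of exactly one path; every node of $D$ is the final extremity of at most one path; the origin of each path is either $e$ or a node of $D$ which is itself the final extremity of some path; a node of $D$ lies on a path only as its origin or final extremity. As in the paper, $\mathcal{S}(D)$ is taken to be the solution in which each vertex $x\neq e$ of $R\cup D$ is the final extremity of exactly one path, whose origin is the nearest proper ancestor of $x$ belonging to $D\cup\{e\}$. For a vertex $u$, $A^u$ is the subtree of $A$ rooted at $u$, and for $u\neq e$, $a^u$ is the arc joining the parent of $u$ to $u$. The path number $\mathrm{pn}(u)$ is the number of paths of $\mathcal{S}(D)$ that pass through $u$ or terminate at $u$ (equivalently, that use the arc $a^u$). The window of $\mathcal{S}(D)$ on arc $a^u$ is the triple $(\mathrm{pn}(u),\ |D\cap V(A^u)|,\ \mathrm{load})$, where $\mathrm{load}=\sum_{w\in V(A^u)}\mathrm{pn}(w)$ is the load of $\mathcal{S}(D)$ in $A^u$, i.e. the number of pairs (path, arc) with the path using the arc, over the arcs of $A^u$ together with $a^u$. *)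

theory Defs
  imports Main
begin

text \<open>A finite rooted tree A is given by its vertex set V, its root e and a parent
function par (with par e = e by convention). The arcs are (par v, v) for v in V - {e},
directed away from the root; a^v denotes the arc (par v, v).\<close>

definition rooted_tree :: "'a set \<Rightarrow> 'a \<Rightarrow> ('a \<Rightarrow> 'a) \<Rightarrow> bool" where
  "rooted_tree V e par \<longleftrightarrow> finite V \<and> e \<in> V \<and> par e = e \<and>
     (\<forall>v\<in>V. par v \<in> V \<and> (\<exists>k. (par ^^ k) v = e))"

definition children :: "'a set \<Rightarrow> 'a \<Rightarrow> ('a \<Rightarrow> 'a) \<Rightarrow> 'a \<Rightarrow> 'a set" where
  "children V e par u = {w \<in> V. w \<noteq> e \<and> par w = u}"

definition leaves :: "'a set \<Rightarrow> 'a \<Rightarrow> ('a \<Rightarrow> 'a) \<Rightarrow> 'a set" where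
  "leaves V e par = {v \<in> V. children V e par v = {}}"

definition anc_eq :: "('a \<Rightarrow> 'a) \<Rightarrow> 'a \<Rightarrow> 'a \<Rightarrow> bool" where
  "anc_eq par v w \<longleftrightarrow> (\<exists>k. (par ^^ k) v = w)"

definition subtree :: "'a set \<Rightarrow> ('a \<Rightarrow> 'a) \<Rightarrow> 'a \<Rightarrow> 'a set" where
  "subtree V par u = {w \<in> V. anc_eq par w u}"

definition orig_dist :: "'a \<Rightarrow> ('a \<Rightarrow> 'a) \<Rightarrow> 'a set \<Rightarrow> 'a \<Rightarrow> nat" where
  "orig_dist e par D x = (LEAST k. 0 < k \<and> (par ^^ k) x \<in> D \<union> {e})"

text \<open>the directed path of S(D) ending at x, as the list of its vertices from its origin
(nearest proper ancestor of x in D \<union> {e}) down to x\<close>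
definition path_to :: "'a \<Rightarrow> ('a \<Rightarrow> 'a) \<Rightarrow> 'a set \<Rightarrow> 'a \<Rightarrow> 'a list" where
  "path_to e par D x = rev (map (\<lambda>i. (par ^^ i) x) [0..<Suc (orig_dist e par D x)])"

definition sol :: "'a \<Rightarrow> ('a \<Rightarrow> 'a) \<Rightarrow> 'a set \<Rightarrow> 'a set \<Rightarrow> 'a list set" where
  "sol e par R D = path_to e par D ` ((R \<union> D) - {e})"

text \<open>path number of u: number of paths of S(D) using the arc a^u, i.e. having u as a
non-origin vertex\<close>
definition pn :: "'a \<Rightarrow> ('a \<Rightarrow> 'a) \<Rightarrow> 'a set \<Rightarrow> 'a set \<Rightarrow> 'a \<Rightarrow> nat" where
  "pn e par R D u = card {P \<in> sol e par R D. u \<in> set (tl P)}"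

definition load :: "'a set \<Rightarrow> 'a \<Rightarrow> ('a \<Rightarrow> 'a) \<Rightarrow> 'a set \<Rightarrow> 'a set \<Rightarrow> 'a \<Rightarrow> nat" where
  "load V e par R D u = (\<Sum>w\<in>subtree V par u. pn e par R D w)"

definition window :: "'a set \<Rightarrow> 'a \<Rightarrow> ('a \<Rightarrow> 'a) \<Rightarrow> 'a set \<Rightarrow> 'a set \<Rightarrow> 'a \<Rightarrow> nat \<times> nat \<times> nat" where
  "window V e par R D u =
     (pn e par R D u, card (D \<inter> subtree V par u), load V e par R D u)"

end

theory Submission
  imports Defs "HOL-Library.Disjoint_Sets"
begin

definition T :: "('a \<Rightarrow> 'a) \<Rightarrow> 'a set \<Rightarrow> ('a \<Rightarrow> bool) \<Rightarrow> 'a \<Rightarrow> 'a set" where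
  "T par S P u = {x\<in>S. \<exists>i. (par^^i) x = u \<and> (\<forall>j. 0<j \<and> j\<le>i \<longrightarrow> P ((par^^j) x))}"

lemma fix_pow: "par e = e \<Longrightarrow> (par^^n) e = e"
  by (induction n) auto

lemma pow_in: "rooted_tree V e par \<Longrightarrow> x \<in> V \<Longrightarrow> (par^^n) x \<in> V"
  by (induction n) (auto simp: rooted_tree_def)

lemma no_cycle:
  assumes tr: "rooted_tree V e par" and v: "v \<in> V" "v \<noteq> e" and n: "n > 0"
  shows "(par^^n) v \<noteq> v"
proof
  assume c: "(par^^n) v = v"
  obtain k where k: "(par^^k) v = e" using tr v unfolding rooted_tree_def by blast
  have m: "(par^^(m*n)) v = v" for m
    by (induction m) (auto simp: funpow_add c)
  have "k \<le> k*n" using n by simp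
  then have "(par^^(k*n)) v = (par^^(k*n-k)) ((par^^k) v)"
    by (metis funpow_add le_add_diff_inverse2 o_apply)
  also have "\<dots> = e" using k fix_pow tr unfolding rooted_tree_def by metis
  finally show False using m v by simp
qed

lemma uniq_idx:
  assumes tr: "rooted_tree V e par" and x: "x \<in> V" and u: "u \<noteq> e"
    and i: "(par^^i) x = u" and j: "(par^^j) x = u"
  shows "i = j"
proof (rule ccontr)
  assume "i \<noteq> j"
  then consider "i < j" | "j < i" by linarith
  then show False
  proof cases
    case 1
    have "(par^^(j-i)) u = (par^^j) x" using 1 i
      by (metis funpow_add le_add_diff_inverse2 less_imp_le o_apply)
    then show False using no_cycle[OF tr _ u, of "j-i"] pow_in[OF tr x, of i] i j 1 by auto
  next
    case 2
    have "(par^^(i-j)) u = (par^^i) x" using 2 j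
      by (metis funpow_add le_add_diff_inverse2 less_imp_le o_apply)
    then show False using no_cycle[OF tr _ u, of "i-j"] pow_in[OF tr x, of j] i j 2 by auto
  qed
qed

lemma T_decomp:
  assumes tr: "rooted_tree V e par" and S: "S \<subseteq> V" and u: "u \<in> V" "u \<noteq> e" and P: "P u"
  shows "T par S P u = (if u \<in> S then {u} else {}) \<union> (\<Union>c\<in>children V e par u. T par S P c)"
    and "disjoint_family_on (T par S P) (children V e par u)"
    and "\<And>c. c \<in> children V e par u \<Longrightarrow> u \<notin> T par S P c"
proof -
  show "T par S P u = (if u \<in> S then {u} else {}) \<union> (\<Union>c\<in>children V e par u. T par S P c)"
  proof (intro equalityI subsetI)
    fix x assume "x \<in> T par S P u"
    then obtain i where xS: "x \<in> S" and i: "(par^^i) x = u" and ok: "\<forall>j. 0<j \<and> j\<le>i \<longrightarrow> P ((par^^j) x)"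
      unfolding T_def by blast
    show "x \<in> (if u \<in> S then {u} else {}) \<union> (\<Union>c\<in>children V e par u. T par S P c)"
    proof (cases i)
      case 0 then show ?thesis using i xS by auto
    next
      case (Suc k)
      let ?c = "(par^^k) x"
      have xV: "x \<in> V" using xS S by auto
      have pc: "par ?c = u" using i Suc by (simp add: funpow_swap1)
      have cV: "?c \<in> V" using pow_in[OF tr xV] .
      have "?c \<noteq> e" using pc u tr unfolding rooted_tree_def by auto
      then have cC: "?c \<in> children V e par u" using cV pc unfolding children_def by auto
      have "x \<in> T par S P ?c" unfolding T_def using xS ok Suc by auto
      then show ?thesis using cC by auto
    qed
  next
    fix x assume x: "x \<in> (if u \<in> S then {u} else {}) \<union> (\<Union>c\<in>children V e par u. T par S P c)"
    show "x \<in> T par S P u"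
    proof (cases "x \<in> (if u \<in> S then {u} else {})")
      case True then show ?thesis unfolding T_def
        by (auto split: if_splits intro!: exI[of _ 0])
    next
      case False
      then obtain c where c: "c \<in> children V e par u" and xc: "x \<in> T par S P c" using x by auto
      then obtain i where xS: "x \<in> S" and i: "(par^^i) x = c" and ok: "\<forall>j. 0<j \<and> j\<le>i \<longrightarrow> P ((par^^j) x)"
        unfolding T_def by blast
      have pc: "par c = u" using c unfolding children_def by auto
      have i2: "(par^^Suc i) x = u" using i pc by simp
      have "\<forall>j. 0<j \<and> j\<le>Suc i \<longrightarrow> P ((par^^j) x)"
        using ok i2 P by (metis le_Suc_eq)
      then show ?thesis unfolding T_def using xS i2 by blast
    qed
  qed
  show "disjoint_family_on (T par S P) (children V e par u)"
    unfolding disjoint_family_on_def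
  proof (intro ballI impI)
    fix c1 c2 assume c1: "c1 \<in> children V e par u" and c2: "c2 \<in> children V e par u" and ne: "c1 \<noteq> c2"
    show "T par S P c1 \<inter> T par S P c2 = {}"
    proof (rule ccontr)
      assume "T par S P c1 \<inter> T par S P c2 \<noteq> {}"
      then obtain x i1 i2 where xS: "x \<in> S" and i1: "(par^^i1) x = c1" and i2: "(par^^i2) x = c2"
        unfolding T_def by blast
      have "par c1 = u" "par c2 = u" using c1 c2 unfolding children_def by auto
      then have "(par^^Suc i1) x = u" "(par^^Suc i2) x = u" using i1 i2 by auto
      then have "Suc i1 = Suc i2" using uniq_idx[OF tr _ u(2)] xS S by blast
      then show False using i1 i2 ne by simp
    qed
  qed
  fix c assume c: "c \<in> children V e par u"
  show "u \<notin> T par S P c"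
  proof
    assume "u \<in> T par S P c"
    then obtain i where i: "(par^^i) u = c" unfolding T_def by blast
    have "par c = u" using c unfolding children_def by auto
    then have "(par^^Suc i) u = u" using i by simp
    then show False using no_cycle[OF tr u, of "Suc i"] by simp
  qed
qed

lemma subtree_T: "subtree V par u = T par V (\<lambda>_. True) u"
  unfolding subtree_def T_def anc_eq_def by auto

lemma set_tl_path: "set (tl (path_to e par D x)) = {(par^^i) x |i. i < orig_dist e par D x}"
proof -
  have "tl (path_to e par D x) = rev (map (\<lambda>i. (par ^^ i) x) [0..<orig_dist e par D x])"
    unfolding path_to_def by simp
  then show ?thesis by auto
qed

lemma od_char:
  assumes tr: "rooted_tree V e par" and x: "x \<in> V"
  shows "i < orig_dist e par D x \<longleftrightarrow> (\<forall>j. 0<j \<and> j\<le>i \<longrightarrow> (par^^j) x \<notin> D \<union> {e})"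
proof -
  obtain k where k: "(par^^k) x = e" using tr x unfolding rooted_tree_def by blast
  have ex: "0 < Suc k \<and> (par^^Suc k) x \<in> D \<union> {e}" using k tr unfolding rooted_tree_def by simp
  let ?Q = "\<lambda>k. 0 < k \<and> (par ^^ k) x \<in> D \<union> {e}"
  have Q: "?Q (orig_dist e par D x)" unfolding orig_dist_def by (rule LeastI[of ?Q, OF ex])
  have mn: "\<And>j. j < orig_dist e par D x \<Longrightarrow> \<not> ?Q j" unfolding orig_dist_def by (rule not_less_Least)
  show ?thesis
  proof
    assume "i < orig_dist e par D x"
    then show "\<forall>j. 0<j \<and> j\<le>i \<longrightarrow> (par^^j) x \<notin> D \<union> {e}" proof (intro allI impI)
      fix j assume "0 < j \<and> j \<le> i"
      then have "j < orig_dist e par D x" using \<open>i < orig_dist e par D x\<close> by linarith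
      then show "(par^^j) x \<notin> D \<union> {e}" using mn \<open>0 < j \<and> j \<le> i\<close> by blast
    qed
  next
    assume h: "\<forall>j. 0<j \<and> j\<le>i \<longrightarrow> (par^^j) x \<notin> D \<union> {e}"
    show "i < orig_dist e par D x"
    proof (rule ccontr)
      assume "\<not> i < orig_dist e par D x"
      then show False using h Q by auto
    qed
  qed
qed

lemma pn_T:
  assumes tr: "rooted_tree V e par" and R: "R \<subseteq> V" and D: "D \<subseteq> V"
  shows "pn e par R D u = card (T par ((R \<union> D) - {e}) (\<lambda>y. y \<notin> D \<union> {e}) u)"
proof -
  let ?S = "(R \<union> D) - {e}"
  let ?f = "path_to e par D"
  have inj: "inj_on ?f ?S"
  proof (rule inj_onI)
    fix x y assume "?f x = ?f y"
    then have "last (?f x) = last (?f y)" by simp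
    moreover have "last (?f z) = z" for z unfolding path_to_def
      by (simp add: last_rev hd_map del: upt_Suc)
    ultimately show "x = y" by simp
  qed
  have eq: "{P \<in> sol e par R D. u \<in> set (tl P)} = ?f ` {x \<in> ?S. u \<in> set (tl (?f x))}"
    unfolding sol_def by auto
  have eq2: "{x \<in> ?S. u \<in> set (tl (?f x))} = T par ?S (\<lambda>y. y \<notin> D \<union> {e}) u"
  proof -
    have "u \<in> set (tl (?f x)) \<longleftrightarrow> (\<exists>i. (par^^i) x = u \<and> (\<forall>j. 0<j \<and> j\<le>i \<longrightarrow> (par^^j) x \<notin> D \<union> {e}))"
      if "x \<in> ?S" for x
    proof -
      have xV: "x \<in> V" using that R D by auto
      show ?thesis unfolding set_tl_path using od_char[OF tr xV] by blast
    qed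
    then show ?thesis unfolding T_def by auto
  qed
  show ?thesis unfolding pn_def eq eq2[symmetric]
    by (rule card_image) (rule inj_on_subset[OF inj], auto)
qed

theorem lemma2:
  fixes V :: "'a set" and e :: 'a and par :: "'a \<Rightarrow> 'a" and R D :: "'a set" and u :: 'a
  assumes tree: "rooted_tree V e par"
    and R_sub: "R \<subseteq> V" and leaves_R: "leaves V e par \<subseteq> R"
    and D_sub: "D \<subseteq> V"
    and u_in: "u \<in> V" and u_ne: "u \<noteq> e"
  defines "C \<equiv> children V e par u"
  defines "sb \<equiv> (\<Sum>c\<in>C. fst (window V e par R D c))"
    and "sd \<equiv> (\<Sum>c\<in>C. fst (snd (window V e par R D c)))"
    and "sl \<equiv> (\<Sum>c\<in>C. snd (snd (window V e par R D c)))"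
  shows "window V e par R D u =
     (if u \<in> D then (1, 1 + sd, sl + 1)
      else if u \<in> R then (1 + sb, sd, sl + sb + 1)
      else (sb, sd, sl + sb))"
proof -
  have finV: "finite V" using tree unfolding rooted_tree_def by simp
  have finC: "finite C" unfolding C_def children_def using finV by simp
  let ?S = "(R \<union> D) - {e}"
  let ?P = "\<lambda>y. y \<notin> D \<union> {e}"
  have finT: "finite (T par S P c)" if "S \<subseteq> V" for S P c
    using finV that unfolding T_def by (auto intro: finite_subset)
  note sd = T_decomp[OF tree order_refl u_in u_ne, of "\<lambda>_. True", folded C_def subtree_T]
  have sub_eq: "subtree V par u = {u} \<union> (\<Union>c\<in>C. subtree V par c)"
    using sd(1) u_in by simp
  have unot: "u \<notin> (\<Union>c\<in>C. subtree V par c)" using sd(3) by auto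
  have finS: "finite (subtree V par c)" for c unfolding subtree_T by (rule finT) simp
  have stf: "subtree V par = T par V (\<lambda>_. True)" by (rule ext) (rule subtree_T)
  have disjS: "disjoint_family_on (subtree V par) C" using sd(2)[OF TrueI] unfolding stf .
  have load_eq: "load V e par R D u = pn e par R D u + sl"
  proof -
    have "load V e par R D u = pn e par R D u + (\<Sum>w\<in>(\<Union>c\<in>C. subtree V par c). pn e par R D w)"
      unfolding load_def sub_eq using unot finC finS by (subst sum.union_disjoint) auto
    also have "(\<Sum>w\<in>(\<Union>c\<in>C. subtree V par c). pn e par R D w) = sl"
      unfolding sl_def window_def load_def snd_conv
      by (rule sum.UNION_disjoint_family[OF finC _ disjS]) (simp add: finS)
    finally show ?thesis .
  qed
  have dcount: "card (D \<inter> subtree V par u) = (if u \<in> D then 1 else 0) + sd"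
  proof -
    have e1: "D \<inter> subtree V par u = (D \<inter> {u}) \<union> (\<Union>c\<in>C. D \<inter> subtree V par c)"
      using sub_eq by auto
    have "card (D \<inter> subtree V par u) = card (D \<inter> {u}) + card (\<Union>c\<in>C. D \<inter> subtree V par c)"
      unfolding e1 using unot finC finS by (subst card_Un_disjoint) auto
    also have "card (\<Union>c\<in>C. D \<inter> subtree V par c) = sd"
    proof -
      have dj: "disjoint_family_on (\<lambda>c. D \<inter> subtree V par c) C"
        using disjS unfolding disjoint_family_on_def by blast
      show ?thesis unfolding sd_def window_def fst_conv snd_conv
        by (rule card_UN_disjoint'[OF dj _ finC]) (simp add: finS)
    qed
    finally show ?thesis by auto
  qed
  have SV: "?S \<subseteq> V" using R_sub D_sub by auto
  have pn_eq: "pn e par R D u = (if u \<in> D then 1 else (if u \<in> R then 1 else 0) + sb)"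
  proof (cases "u \<in> D")
    case True
    have "T par ?S ?P u = {u}"
    proof
      show "T par ?S ?P u \<subseteq> {u}"
      proof
        fix x assume "x \<in> T par ?S ?P u"
        then obtain i where i: "(par^^i) x = u" and ok: "\<forall>j. 0<j \<and> j\<le>i \<longrightarrow> ?P ((par^^j) x)"
          unfolding T_def by blast
        have "i = 0" using ok i True by (metis le_refl neq0_conv UnI1)
        then show "x \<in> {u}" using i by simp
      qed
      show "{u} \<subseteq> T par ?S ?P u" unfolding T_def using True u_ne by (auto intro!: exI[of _ 0])
    qed
    then show ?thesis using True pn_T[OF tree R_sub D_sub] by simp
  next
    case False
    note td = T_decomp[OF tree SV u_in u_ne, of ?P, folded C_def]
    have Pu: "?P u" using False u_ne by simp
    have "pn e par R D u = card ((if u \<in> ?S then {u} else {}) \<union> (\<Union>c\<in>C. T par ?S ?P c))"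
      using pn_T[OF tree R_sub D_sub] td(1)[OF Pu] by simp
    also have "\<dots> = card (if u \<in> ?S then {u} else {}) + card (\<Union>c\<in>C. T par ?S ?P c)"
      using td(3)[OF Pu] finC finT[OF SV] by (subst card_Un_disjoint) auto
    also have "card (\<Union>c\<in>C. T par ?S ?P c) = sb"
      unfolding sb_def window_def pn_T[OF tree R_sub D_sub] fst_conv
      by (rule card_UN_disjoint'[OF td(2)[OF Pu] _ finC]) (rule finT[OF SV])
    finally show ?thesis using False u_ne by auto
  qed
  show ?thesis unfolding window_def using load_eq dcount pn_eq by auto
qed

end
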